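(* Let $G$ be a connected graph with $n\ge 13$ vertices and maximum degree $\Delta=\Delta(G)$. Suppose one of the following holds: (1) $n/2\le \Delta\le n-4$ and $e(G)=n+k$ for some $1\le k\le 10$; (2) $\Delta=n-3$ and $e(G)=n+k$ for some $1\le k\le 7$; (3) $\Delta=n-2$ and $e(G)=n+k$ for some $1\le k\le 4$. Then $\frac{q(G)}{R(G)}<\frac{n}{\sqrt{n-1}}$.
   Context: All graphs are finite and simple; $e(G)$ is the number of edges and $\Delta(G)$ the maximum degree. For a vertex $u$, $d(u)$ is its degree. The Randić index is $R(G)=\sum_{\{u,v\}\in E(G)} \frac{1}{\sqrt{d(u)d(v)}}$. The signless Laplacian is $Q=D+A$ ($D$ the diagonal degree matrix, $A$ the adjacency matrix), and $q(G)$ is its largest eigenvalue. *)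

theory Defs
  imports "HOL-Analysis.Analysis"
begin

definition simple_graph :: "'a set \<Rightarrow> ('a \<Rightarrow> 'a \<Rightarrow> bool) \<Rightarrow> bool" where
  "simple_graph V E \<longleftrightarrow> finite V \<and> (\<forall>u v. E u v \<longrightarrow> u \<in> V \<and> v \<in> V)
     \<and> (\<forall>u v. E u v \<longrightarrow> E v u) \<and> (\<forall>u. \<not> E u u)"

definition connected_graph :: "'a set \<Rightarrow> ('a \<Rightarrow> 'a \<Rightarrow> bool) \<Rightarrow> bool" where
  "connected_graph V E \<longleftrightarrow> V \<noteq> {} \<and> (\<forall>u\<in>V. \<forall>v\<in>V. E\<^sup>*\<^sup>* u v)"

definition degree :: "'a set \<Rightarrow> ('a \<Rightarrow> 'a \<Rightarrow> bool) \<Rightarrow> 'a \<Rightarrow> nat" where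
  "degree V E u = card {v \<in> V. E u v}"

definition max_degree :: "'a set \<Rightarrow> ('a \<Rightarrow> 'a \<Rightarrow> bool) \<Rightarrow> nat" where
  "max_degree V E = Max (degree V E ` V)"

definition edge_set :: "'a set \<Rightarrow> ('a \<Rightarrow> 'a \<Rightarrow> bool) \<Rightarrow> 'a set set" where
  "edge_set V E = {{u, v} | u v. u \<in> V \<and> v \<in> V \<and> E u v}"

definition num_edges :: "'a set \<Rightarrow> ('a \<Rightarrow> 'a \<Rightarrow> bool) \<Rightarrow> nat" where
  "num_edges V E = card (edge_set V E)"

definition randic :: "'a set \<Rightarrow> ('a \<Rightarrow> 'a \<Rightarrow> bool) \<Rightarrow> real" where
  "randic V E = (\<Sum>e\<in>edge_set V E. 1 / sqrt (\<Prod>w\<in>e. real (degree V E w)))"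

definition signless_laplacian :: "'a set \<Rightarrow> ('a \<Rightarrow> 'a \<Rightarrow> bool) \<Rightarrow> 'a \<Rightarrow> 'a \<Rightarrow> real" where
  "signless_laplacian V E u v =
     (if u = v then real (degree V E u) else 0) + (if E u v then 1 else 0)"

definition is_eigenvalue :: "'a set \<Rightarrow> ('a \<Rightarrow> 'a \<Rightarrow> real) \<Rightarrow> real \<Rightarrow> bool" where
  "is_eigenvalue V M mu \<longleftrightarrow> (\<exists>x :: 'a \<Rightarrow> real. (\<exists>u\<in>V. x u \<noteq> 0) \<and>
      (\<forall>u\<in>V. (\<Sum>v\<in>V. M u v * x v) = mu * x u))"

text \<open>q(G): largest eigenvalue of the signless Laplacian (symmetric, so all eigenvalues are real).\<close>
definition signless_spectral_radius :: "'a set \<Rightarrow> ('a \<Rightarrow> 'a \<Rightarrow> bool) \<Rightarrow> real" where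
  "signless_spectral_radius V E = Max {mu. is_eigenvalue V (signless_laplacian V E) mu}"

end

theory Submission
  imports Defs "Jordan_Normal_Form.Spectral_Radius"
begin

lemma real_sym_ev_exists:
  fixes V :: "'a set" and Mf :: "'a \<Rightarrow> 'a \<Rightarrow> real"
  assumes fin: "finite V" and ne: "V \<noteq> {}" and sym: "\<And>u v. Mf u v = Mf v u"
  shows "finite {mu. is_eigenvalue V Mf mu} \<and> {mu. is_eigenvalue V Mf mu} \<noteq> {}"
proof -
  define n where "n = card V"
  obtain f where f: "bij_betw f {0..<n} V" using ex_bij_betw_nat_finite[OF fin] n_def by blast
  have npos: "n > 0" using fin ne n_def by (simp add: card_gt_0_iff)
  define A where "A = Matrix.mat n n (\<lambda>(i,j). Mf (f i) (f j))"
  have A: "A \<in> carrier_mat n n" unfolding A_def by simp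
  define g where "g = inv_into {0..<n} f"
  have fi: "\<And>i. i < n \<Longrightarrow> f i \<in> V" using f by (auto simp: bij_betw_def)
  have gi: "\<And>u. u \<in> V \<Longrightarrow> g u < n \<and> f (g u) = u"
    using f unfolding g_def
    by (metis atLeastLessThan_iff bij_betw_imp_surj_on bij_betw_inv_into_right inv_into_into)
  have gf: "\<And>i. i < n \<Longrightarrow> g (f i) = i"
    using f unfolding g_def by (metis atLeastLessThan_iff bij_betw_inv_into_left zero_le)
  have reidx: "\<And>h. (\<Sum>j=0..<n. h (f j)) = (\<Sum>w\<in>V. h w)"
    using f by (rule sum.reindex_bij_betw)
  have mv: "\<And>v i. v \<in> carrier_vec n \<Longrightarrow> i < n \<Longrightarrow> (A *\<^sub>v v) $ i = (\<Sum>j=0..<n. Mf (f i) (f j) * v $ j)"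
    using A by (auto simp: A_def scalar_prod_def intro!: sum.cong)
  have to_ev: "eigenvalue A mu" if "is_eigenvalue V Mf mu" for mu
  proof -
    from that obtain x u0 where u0: "u0 \<in> V" "x u0 \<noteq> 0"
      and eq: "\<And>u. u \<in> V \<Longrightarrow> (\<Sum>v\<in>V. Mf u v * x v) = mu * x u"
      unfolding is_eigenvalue_def by blast
    define v where "v = vec n (\<lambda>j. x (f j))"
    have vc: "v \<in> carrier_vec n" unfolding v_def by simp
    have "v $ (g u0) \<noteq> 0" using gi[OF u0(1)] u0 by (simp add: v_def)
    hence v0: "v \<noteq> 0\<^sub>v n" using gi[OF u0(1)] by auto
    have "A *\<^sub>v v = mu \<cdot>\<^sub>v v"
    proof (rule eq_vecI)
      fix i assume i: "i < dim_vec (mu \<cdot>\<^sub>v v)"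
      hence i': "i < n" using vc by simp
      have "(A *\<^sub>v v) $ i = (\<Sum>j=0..<n. Mf (f i) (f j) * x (f j))"
        using mv[OF vc i'] by (simp add: v_def)
      also have "\<dots> = (\<Sum>w\<in>V. Mf (f i) w * x w)" by (rule reidx)
      also have "\<dots> = mu * x (f i)" using eq fi[OF i'] by blast
      finally show "(A *\<^sub>v v) $ i = (mu \<cdot>\<^sub>v v) $ i" using i' by (simp add: v_def)
    qed (use A vc in simp)
    thus ?thesis unfolding eigenvalue_def eigenvector_def using vc v0 A by auto
  qed
  have from_ev: "is_eigenvalue V Mf r" if "eigenvalue A r" for r
  proof -
    from that obtain v where vc: "v \<in> carrier_vec n" and v0: "v \<noteq> 0\<^sub>v n"
      and ev: "A *\<^sub>v v = r \<cdot>\<^sub>v v"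
      unfolding eigenvalue_def eigenvector_def using A by auto
    obtain j where j: "j < n" "v $ j \<noteq> 0"
    proof -
      have "\<exists>j<n. v $ j \<noteq> 0"
      proof (rule ccontr)
        assume "\<not> ?thesis"
        hence "v = 0\<^sub>v n" using vc by (intro eq_vecI) auto
        thus False using v0 by simp
      qed
      thus ?thesis using that by blast
    qed
    define x where "x u = v $ (g u)" for u
    have "\<forall>u\<in>V. (\<Sum>w\<in>V. Mf u w * x w) = r * x u"
    proof
      fix u assume u: "u \<in> V"
      have "(\<Sum>w\<in>V. Mf u w * x w) = (\<Sum>j=0..<n. Mf u (f j) * x (f j))" by (rule reidx[symmetric])
      also have "\<dots> = (\<Sum>j=0..<n. Mf (f (g u)) (f j) * v $ j)"
        using gi[OF u] gf by (auto simp: x_def intro!: sum.cong)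
      also have "\<dots> = (A *\<^sub>v v) $ (g u)" using mv[OF vc] gi[OF u] by simp
      also have "\<dots> = r * x u" using ev gi[OF u] vc by (simp add: x_def)
      finally show "(\<Sum>w\<in>V. Mf u w * x w) = r * x u" .
    qed
    moreover have "x (f j) \<noteq> 0" using j gf by (simp add: x_def)
    ultimately show ?thesis unfolding is_eigenvalue_def using fi[OF j(1)] by blast
  qed
  have sub: "{mu. is_eigenvalue V Mf mu} \<subseteq> spectrum A"
    using to_ev by (auto simp: spectrum_def)
  have finS: "finite {mu. is_eigenvalue V Mf mu}"
    using card_finite_spectrum(1)[OF A] sub finite_subset by blast
  define Ac :: "complex mat" where "Ac = of_real_hom.mat_hom A"
  have Ac: "Ac \<in> carrier_mat n n" using A unfolding Ac_def by simp
  obtain lam where "lam \<in> spectrum Ac" using spectrum_non_empty[OF Ac npos] by blast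
  hence "eigenvalue Ac lam" by (simp add: spectrum_def)
  then obtain vc where vcc: "vc \<in> carrier_vec n" and vc0: "vc \<noteq> 0\<^sub>v n"
      and evc: "Ac *\<^sub>v vc = lam \<cdot>\<^sub>v vc"
    unfolding eigenvalue_def eigenvector_def using Ac by auto
  define a where "a i j = complex_of_real (Mf (f i) (f j))" for i j
  have ev: "(\<Sum>j=0..<n. a i j * vc $ j) = lam * vc $ i" if i: "i < n" for i
  proof -
    have "(Ac *\<^sub>v vc) $ i = lam * vc $ i" using evc i vcc by simp
    moreover have "(Ac *\<^sub>v vc) $ i = (\<Sum>j=0..<n. a i j * vc $ j)"
      using i vcc Ac by (auto simp: Ac_def A_def a_def scalar_prod_def intro!: sum.cong)
    ultimately show ?thesis by simp
  qed
  define S1 where "S1 = (\<Sum>i=0..<n. cnj (vc $ i) * (\<Sum>j=0..<n. a i j * vc $ j))"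
  define N where "N = (\<Sum>i=0..<n. cnj (vc $ i) * vc $ i)"
  have S1N: "S1 = lam * N" unfolding S1_def N_def using ev
    by (simp add: sum_distrib_left mult_ac)
  have acnj: "cnj (a i j) = a j i" for i j by (simp add: a_def sym)
  have "cnj S1 = (\<Sum>i=0..<n. \<Sum>j=0..<n. vc $ i * a j i * cnj (vc $ j))"
    unfolding S1_def by (simp add: sum_distrib_left acnj mult_ac)
  also have "\<dots> = (\<Sum>j=0..<n. \<Sum>i=0..<n. vc $ i * a j i * cnj (vc $ j))" by (rule sum.swap)
  also have "\<dots> = S1" unfolding S1_def by (simp add: sum_distrib_left mult_ac)
  finally have cS: "cnj S1 = S1" .
  have Nreal: "N = complex_of_real (\<Sum>i=0..<n. (cmod (vc $ i))\<^sup>2)"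
  proof -
    have pt: "\<And>z. cnj z * z = complex_of_real ((cmod z)\<^sup>2)" by (metis complex_norm_square mult.commute)
    show ?thesis unfolding N_def of_real_sum pt ..
  qed
  obtain j where j: "j < n" "vc $ j \<noteq> 0"
  proof -
    have "\<exists>j<n. vc $ j \<noteq> 0"
    proof (rule ccontr)
      assume "\<not> ?thesis"
      hence "vc = 0\<^sub>v n" using vcc by (intro eq_vecI) auto
      thus False using vc0 by simp
    qed
    thus ?thesis using that by blast
  qed
  have "(\<Sum>i=0..<n. (cmod (vc $ i))\<^sup>2) > 0"
  proof -
    have "(\<Sum>i=0..<n. (cmod (vc $ i))\<^sup>2) \<ge> (cmod (vc $ j))\<^sup>2"
      by (rule member_le_sum) (use j in auto)
    moreover have "(cmod (vc $ j))\<^sup>2 > 0" using j by simp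
    ultimately show ?thesis by linarith
  qed
  hence N0: "N \<noteq> 0" using Nreal by (metis of_real_eq_0_iff order_less_irrefl)
  have "cnj N = N" using Nreal by (metis complex_cnj_complex_of_real)
  hence "cnj lam * N = lam * N" using cS S1N by (metis complex_cnj_mult)
  hence "cnj lam = lam" using N0 by simp
  hence "Im (cnj lam) = Im lam" by simp
  hence "Im lam = 0" by simp
  hence lamR: "lam = complex_of_real (Re lam)" by (simp add: complex_eq_iff)
  have "poly (char_poly Ac) lam = 0" using \<open>eigenvalue Ac lam\<close> eigenvalue_root_char_poly[OF Ac] by simp
  moreover have cp: "char_poly Ac = map_poly of_real (char_poly A)"
    unfolding Ac_def by (rule of_real_hom.char_poly_hom[OF A])
  ultimately have "poly (map_poly of_real (char_poly A)) (complex_of_real (Re lam)) = 0"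
    using lamR by metis
  hence "poly (char_poly A) (Re lam) = 0" by (simp add: of_real_hom.poly_map_poly)
  hence "eigenvalue A (Re lam)" using eigenvalue_root_char_poly[OF A] by simp
  hence "Re lam \<in> {mu. is_eigenvalue V Mf mu}" using from_ev by simp
  with finS show ?thesis by blast
qed


lemma double_count:
  fixes g :: "'a set \<Rightarrow> real"
  assumes sg: "simple_graph V E"
  shows "(\<Sum>u\<in>V. \<Sum>v\<in>{v\<in>V. E u v}. g {u,v}) = 2 * (\<Sum>e\<in>edge_set V E. g e)"
proof -
  have fin: "finite V" and inV: "\<And>u v. E u v \<Longrightarrow> u \<in> V \<and> v \<in> V"
    and sym: "\<And>u v. E u v \<Longrightarrow> E v u" and irr: "\<And>u. \<not> E u u"
    using sg unfolding simple_graph_def by auto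
  define P where "P = Sigma V (\<lambda>u. {v\<in>V. E u v})"
  define h where "h p = {fst p, snd p}" for p :: "'a \<times> 'a"
  have finP: "finite P" unfolding P_def using fin by auto
  have "(\<Sum>u\<in>V. \<Sum>v\<in>{v\<in>V. E u v}. g {u,v}) = (\<Sum>p\<in>P. g (h p))"
    unfolding P_def h_def using fin by (subst sum.Sigma) (auto simp: case_prod_beta)
  also have "\<dots> = (\<Sum>e\<in>h ` P. \<Sum>p\<in>{p\<in>P. h p = e}. g (h p))"
    by (rule sum.image_gen[OF finP])
  also have "\<dots> = (\<Sum>e\<in>edge_set V E. 2 * g e)"
  proof (rule sum.cong)
    show "h ` P = edge_set V E"
    proof
      show "h ` P \<subseteq> edge_set V E"
      proof
        fix e assume "e \<in> h ` P"
        then obtain u v where "u \<in> V" "v \<in> V" "E u v" "e = {u,v}" unfolding P_def h_def by auto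
        thus "e \<in> edge_set V E" unfolding edge_set_def by blast
      qed
      show "edge_set V E \<subseteq> h ` P"
      proof
        fix e assume "e \<in> edge_set V E"
        then obtain u v where uv: "u \<in> V" "v \<in> V" "E u v" "e = {u,v}" unfolding edge_set_def by blast
        hence "(u,v) \<in> P" "e = h (u,v)" unfolding P_def h_def by auto
        thus "e \<in> h ` P" by blast
      qed
    qed
  next
    fix e assume "e \<in> edge_set V E"
    then obtain a b where ab: "a \<in> V" "b \<in> V" "E a b" "e = {a,b}" unfolding edge_set_def by blast
    have ne: "a \<noteq> b" using ab irr by blast
    have fib: "{p\<in>P. h p = e} = {(a,b),(b,a)}"
      using ab sym unfolding P_def h_def by (auto simp: doubleton_eq_iff)
    have "(\<Sum>p\<in>{p\<in>P. h p = e}. g (h p)) = (\<Sum>p\<in>{p\<in>P. h p = e}. g e)"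
      by (rule sum.cong) auto
    also have "\<dots> = 2 * g e" using ne by (simp add: fib)
    finally show "(\<Sum>p\<in>{p\<in>P. h p = e}. g (h p)) = 2 * g e" .
  qed
  also have "\<dots> = 2 * (\<Sum>e\<in>edge_set V E. g e)" by (simp add: sum_distrib_left)
  finally show ?thesis .
qed


lemma handshake:
  assumes sg: "simple_graph V E"
  shows "(\<Sum>u\<in>V. real (Defs.degree V E u)) = 2 * real (num_edges V E)"
proof -
  have fin: "finite V" using sg unfolding simple_graph_def by auto
  have "(\<Sum>u\<in>V. \<Sum>v\<in>{v\<in>V. E u v}. (\<lambda>e. 1::real) {u,v}) = 2 * (\<Sum>e\<in>edge_set V E. (\<lambda>e. 1::real) e)"
    by (rule double_count[OF sg])
  thus ?thesis unfolding degree_def num_edges_def by simp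
qed

lemma randic_eq:
  assumes sg: "simple_graph V E"
  shows "2 * randic V E = (\<Sum>u\<in>V. \<Sum>v\<in>{v\<in>V. E u v}.
            1 / sqrt (real (Defs.degree V E u) * real (Defs.degree V E v)))"
proof -
  have irr: "\<And>u. \<not> E u u" using sg unfolding simple_graph_def by auto
  have "2 * randic V E = (\<Sum>u\<in>V. \<Sum>v\<in>{v\<in>V. E u v}.
       (\<lambda>e. 1 / sqrt (\<Prod>w\<in>e. real (Defs.degree V E w))) {u,v})"
    unfolding randic_def by (rule double_count[OF sg, symmetric])
  also have "\<dots> = (\<Sum>u\<in>V. \<Sum>v\<in>{v\<in>V. E u v}.
            1 / sqrt (real (Defs.degree V E u) * real (Defs.degree V E v)))"
  proof (intro sum.cong refl)
    fix u v assume "v \<in> {v\<in>V. E u v}"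
    hence "u \<noteq> v" using irr by auto
    thus "(\<lambda>e. 1 / sqrt (\<Prod>w\<in>e. real (Defs.degree V E w))) {u,v} =
        1 / sqrt (real (Defs.degree V E u) * real (Defs.degree V E v))" by simp
  qed
  finally show ?thesis .
qed

theorem lemma3p5:
  fixes V :: "'a set" and E :: "'a \<Rightarrow> 'a \<Rightarrow> bool" and n \<Delta> :: nat
  assumes "simple_graph V E" and "connected_graph V E"
    and "n = card V" and "n \<ge> 13"
    and "\<Delta> = max_degree V E"
    and "(real n / 2 \<le> real \<Delta> \<and> \<Delta> \<le> n - 4 \<and> (\<exists>k. 1 \<le> k \<and> k \<le> 10 \<and> num_edges V E = n + k))
       \<or> (\<Delta> = n - 3 \<and> (\<exists>k. 1 \<le> k \<and> k \<le> 7 \<and> num_edges V E = n + k))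
       \<or> (\<Delta> = n - 2 \<and> (\<exists>k. 1 \<le> k \<and> k \<le> 4 \<and> num_edges V E = n + k))"
  shows "signless_spectral_radius V E / randic V E < real n / sqrt (real n - 1)"
proof -
  note sg = assms(1)
  have fin: "finite V" and inV: "\<And>u v. E u v \<Longrightarrow> u \<in> V \<and> v \<in> V"
    and sym: "\<And>u v. E u v \<Longrightarrow> E v u" and irr: "\<And>u. \<not> E u u"
    using sg unfolding simple_graph_def by auto
  define Nb where "Nb u = {v\<in>V. E u v}" for u
  define d where "d u = real (Defs.degree V E u)" for u
  have dNb: "d u = real (card (Nb u))" for u unfolding d_def Nb_def degree_def by simp
  have finNb: "finite (Nb u)" for u unfolding Nb_def using fin by simp
  have NbV: "Nb u \<subseteq> V" for u unfolding Nb_def by auto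
  have uNb: "u \<notin> Nb u" for u unfolding Nb_def using irr by auto
  have Vne: "V \<noteq> {}" using assms(3,4) by auto
  have dpos: "d u \<ge> 1" if u: "u \<in> V" for u
  proof -
    have "card V \<ge> 2" using assms(3,4) by simp
    then obtain v where v: "v \<in> V" "v \<noteq> u"
      by (metis One_nat_def card_le_Suc0_iff_eq fin not_less_eq_eq numeral_2_eq_2 u)
    have "E\<^sup>*\<^sup>* u v" using assms(2) u v unfolding connected_graph_def by blast
    then obtain y where "E u y" using v(2) by (metis converse_rtranclpE)
    hence "y \<in> Nb u" unfolding Nb_def using inV by auto
    hence "card (Nb u) \<ge> 1" using finNb by (metis One_nat_def card_0_eq empty_iff less_one not_le)
    thus ?thesis unfolding dNb by simp
  qed
  have Dfin: "finite (Defs.degree V E ` V)" using fin by simp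
  have dle: "d u \<le> real \<Delta>" if "u \<in> V" for u
    unfolding d_def assms(5) max_degree_def using Max_ge[OF Dfin] that by simp
  obtain w where w: "w \<in> V" "d w = real \<Delta>"
  proof -
    have "Max (Defs.degree V E ` V) \<in> Defs.degree V E ` V" using Max_in[OF Dfin] Vne by simp
    thus ?thesis using that unfolding d_def assms(5) max_degree_def by auto
  qed
  obtain k c :: nat where kE: "num_edges V E = n + k" and c2: "2 \<le> c" and cD: "c + \<Delta> \<le> n"
    and ckn: "c * n \<ge> c * c + n + 2 * k + 1"
    using assms(6)
  proof (elim disjE conjE exE)
    fix k assume "real n / 2 \<le> real \<Delta>" "\<Delta> \<le> n - 4" "1 \<le> k" "k \<le> 10" "num_edges V E = n + k"
    moreover have "4 * n \<ge> 4 * 4 + n + 2 * k + 1" using assms(4) \<open>k \<le> 10\<close> by simp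
    ultimately show thesis using that[of k 4] assms(4) by simp
  next
    fix k assume "\<Delta> = n - 3" "1 \<le> k" "k \<le> 7" "num_edges V E = n + k"
    moreover have "3 * n \<ge> 3 * 3 + n + 2 * k + 1" using assms(4) \<open>k \<le> 7\<close> by simp
    ultimately show thesis using that[of k 3] assms(4) by simp
  next
    fix k assume "\<Delta> = n - 2" "1 \<le> k" "k \<le> 4" "num_edges V E = n + k"
    moreover have "2 * n \<ge> 2 * 2 + n + 2 * k + 1" using assms(4) \<open>k \<le> 4\<close> by simp
    ultimately show thesis using that[of k 2] assms(4) by simp
  qed
  have cD': "real c + real \<Delta> \<le> real n" using cD by (metis of_nat_add of_nat_le_iff)
  have c2': "real c \<ge> 2" using c2 by simp
  have Dn: "real \<Delta> \<le> real n - 2" using cD' c2' by linarith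
  have hs: "(\<Sum>u\<in>V. d u) = 2 * (real n + real k)"
    using handshake[OF sg] kE unfolding d_def by simp
  have Bu: "(d u)\<^sup>2 + (\<Sum>v\<in>Nb u. d v) \<le> real n * d u" if u: "u \<in> V" for u
  proof (cases "d u + real \<Delta> \<le> real n")
    case True
    have "(\<Sum>v\<in>Nb u. d v) \<le> (\<Sum>v\<in>Nb u. real \<Delta>)"
      by (rule sum_mono) (use dle NbV in auto)
    also have "\<dots> = d u * real \<Delta>" by (simp add: dNb)
    finally have "(\<Sum>v\<in>Nb u. d v) \<le> d u * real \<Delta>" .
    moreover have "d u * (d u + real \<Delta>) \<le> d u * real n"
      using True dpos[OF u] by (intro mult_left_mono) auto
    ultimately show ?thesis by (simp add: power2_eq_square algebra_simps)
  next
    case False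
    define Rest where "Rest = V - insert u (Nb u)"
    have sub: "insert u (Nb u) \<subseteq> V" using u NbV by auto
    have "(\<Sum>v\<in>V. d v) = (\<Sum>v\<in>Rest. d v) + (\<Sum>v\<in>insert u (Nb u). d v)"
      unfolding Rest_def by (rule sum.subset_diff[OF sub fin])
    also have "(\<Sum>v\<in>insert u (Nb u). d v) = d u + (\<Sum>v\<in>Nb u. d v)"
      using finNb uNb by simp
    finally have split: "(\<Sum>v\<in>V. d v) = (\<Sum>v\<in>Rest. d v) + d u + (\<Sum>v\<in>Nb u. d v)" by simp
    have cardR: "real (card Rest) = real n - 1 - d u"
    proof -
      have "card (insert u (Nb u)) = card (Nb u) + 1" using finNb uNb by simp
      moreover have "card Rest = card V - card (insert u (Nb u))"
        unfolding Rest_def by (rule card_Diff_subset) (use finNb fin sub finite_subset in auto)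
      moreover have "card (insert u (Nb u)) \<le> card V" using card_mono[OF fin sub] .
      ultimately show ?thesis using assms(3) dNb[of u] by simp
    qed
    have "(\<Sum>v\<in>Rest. d v) \<ge> (\<Sum>v\<in>Rest. 1)"
      by (rule sum_mono) (use dpos Rest_def in auto)
    hence restge: "(\<Sum>v\<in>Rest. d v) \<ge> real n - 1 - d u" using cardR by simp
    have sumNb: "(\<Sum>v\<in>Nb u. d v) \<le> real n + 2 * real k + 1"
      using split hs restge by argo
    have du1: "d u \<ge> real c" using False cD' by linarith
    have du2: "d u \<le> real n - real c" using dle[OF u] cD' by linarith
    have "(d u - real c) * (real n - real c - d u) \<ge> 0" using du1 du2 by simp
    hence "real n * d u - (d u)\<^sup>2 \<ge> real c * real n - real c * real c"
      by (simp add: power2_eq_square algebra_simps)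
    moreover have "real c * real n \<ge> real c * real c + real n + 2 * real k + 1"
      using ckn by (metis (mono_tags) of_nat_add of_nat_mult of_nat_le_iff of_nat_1 of_nat_numeral)
    ultimately show ?thesis using sumNb by linarith
  qed
  define Q where "Q = signless_laplacian V E"
  have Qsym: "Q u v = Q v u" for u v unfolding Q_def signless_laplacian_def using sym by auto
  have evb: "mu \<le> real n" if "is_eigenvalue V Q mu" for mu
  proof -
    from that obtain x u0 where u0: "u0 \<in> V" "x u0 \<noteq> 0"
      and eq: "\<And>u. u \<in> V \<Longrightarrow> (\<Sum>v\<in>V. Q u v * x v) = mu * x u"
      unfolding is_eigenvalue_def by blast
    define y where "y v = x v / d v" for v
    have xy: "x v = d v * y v" if "v \<in> V" for v using dpos[OF that] by (simp add: y_def)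
    define Y where "Y = Max ((\<lambda>v. \<bar>y v\<bar>) ` V)"
    have "Y \<in> (\<lambda>v. \<bar>y v\<bar>) ` V" unfolding Y_def using fin Vne by (intro Max_in) auto
    then obtain u where u: "u \<in> V" "\<bar>y u\<bar> = Y" by (metis imageE)
    have Yge: "\<bar>y v\<bar> \<le> Y" if "v \<in> V" for v unfolding Y_def using fin that by simp
    have "\<bar>y u0\<bar> > 0" using u0 dpos[OF u0(1)] by (simp add: y_def)
    hence Ypos: "Y > 0" using Yge[OF u0(1)] by linarith
    have "(\<Sum>v\<in>V. Q u v * x v) = (\<Sum>v\<in>V. (if u = v then d u * x v else 0) + (if E u v then x v else 0))"
      by (rule sum.cong) (auto simp: Q_def signless_laplacian_def d_def algebra_simps)
    also have "\<dots> = d u * x u + (\<Sum>v\<in>Nb u. x v)"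
      using u fin by (simp add: sum.distrib Nb_def sum.inter_filter)
    finally have equ: "mu * x u = d u * x u + (\<Sum>v\<in>Nb u. x v)" using eq[OF u(1)] by simp
    have "\<bar>\<Sum>v\<in>Nb u. x v\<bar> \<le> (\<Sum>v\<in>Nb u. \<bar>x v\<bar>)" by (rule sum_abs)
    also have "\<dots> \<le> (\<Sum>v\<in>Nb u. d v * Y)"
    proof (rule sum_mono)
      fix v assume v: "v \<in> Nb u"
      hence vV: "v \<in> V" using NbV by auto
      have "\<bar>x v\<bar> = d v * \<bar>y v\<bar>" using xy[OF vV] dpos[OF vV] by (simp add: abs_mult)
      also have "\<dots> \<le> d v * Y" using Yge[OF vV] dpos[OF vV] by simp
      finally show "\<bar>x v\<bar> \<le> d v * Y" .
    qed
    also have "\<dots> = (\<Sum>v\<in>Nb u. d v) * Y" by (simp add: sum_distrib_right)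
    finally have sb: "\<bar>\<Sum>v\<in>Nb u. x v\<bar> \<le> (\<Sum>v\<in>Nb u. d v) * Y" .
    have axu: "\<bar>x u\<bar> = d u * Y" using xy[OF u(1)] u(2) dpos[OF u(1)] by (simp add: abs_mult)
    have "\<bar>mu\<bar> * (d u * Y) = \<bar>mu * x u\<bar>" using axu by (simp add: abs_mult)
    also have "\<dots> \<le> \<bar>d u * x u\<bar> + \<bar>\<Sum>v\<in>Nb u. x v\<bar>" using equ abs_triangle_ineq by simp
    also have "\<dots> \<le> d u * (d u * Y) + (\<Sum>v\<in>Nb u. d v) * Y"
      using sb axu dpos[OF u(1)] by (simp add: abs_mult)
    also have "\<dots> = ((d u)\<^sup>2 + (\<Sum>v\<in>Nb u. d v)) * Y" by (simp add: power2_eq_square algebra_simps)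
    also have "\<dots> \<le> (real n * d u) * Y" using Bu[OF u(1)] Ypos by (intro mult_right_mono) auto
    finally have "\<bar>mu\<bar> * (d u * Y) \<le> real n * (d u * Y)" by (simp add: mult_ac)
    moreover have "d u * Y > 0" using dpos[OF u(1)] Ypos by simp
    ultimately have "\<bar>mu\<bar> \<le> real n" using mult_le_cancel_right_pos by blast
    thus ?thesis by simp
  qed
  have SQ: "finite {mu. is_eigenvalue V Q mu} \<and> {mu. is_eigenvalue V Q mu} \<noteq> {}"
    by (rule real_sym_ev_exists[OF fin Vne Qsym])
  have qle: "signless_spectral_radius V E \<le> real n"
    unfolding signless_spectral_radius_def Q_def[symmetric]
    using SQ evb by (simp add: Max_le_iff)
  define s where "s = sqrt (real \<Delta>)"
  have Dpos: "real \<Delta> \<ge> 1" using dpos[OF w(1)] w(2) by simp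
  have spos: "s > 0" unfolding s_def using Dpos by simp
  define cc where "cc u = (\<Sum>v\<in>Nb u. 1 / sqrt (d u * d v))" for u
  have R2: "2 * randic V E = (\<Sum>u\<in>V. cc u)"
    unfolding randic_eq[OF sg] cc_def Nb_def d_def ..
  have ccge: "cc u \<ge> sqrt (d u) / s" if u: "u \<in> V" for u
  proof -
    have "cc u \<ge> (\<Sum>v\<in>Nb u. 1 / sqrt (d u * real \<Delta>))"
      unfolding cc_def
    proof (rule sum_mono)
      fix v assume "v \<in> Nb u"
      hence vV: "v \<in> V" using NbV by auto
      have "sqrt (d u * d v) \<le> sqrt (d u * real \<Delta>)"
        using dle[OF vV] dpos[OF u] by (intro real_sqrt_le_mono mult_left_mono) auto
      moreover have "sqrt (d u * d v) > 0" using dpos[OF u] dpos[OF vV] by simp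
      ultimately show "1 / sqrt (d u * real \<Delta>) \<le> 1 / sqrt (d u * d v)"
        by (intro divide_left_mono) auto
    qed
    also have "(\<Sum>v\<in>Nb u. 1 / sqrt (d u * real \<Delta>)) = d u / sqrt (d u * real \<Delta>)"
      by (simp add: dNb)
    also have "\<dots> = sqrt (d u) / s"
    proof -
      have "sqrt (d u) * sqrt (d u) = d u" using dpos[OF u] by simp
      thus ?thesis unfolding s_def using dpos[OF u] Dpos
        by (simp add: real_sqrt_mult field_simps)
    qed
    finally show ?thesis .
  qed
  have Nbw: "Nb w = {u\<in>V - {w}. E w u}" unfolding Nb_def using irr by auto
  have ccw: "cc w = (\<Sum>u\<in>V - {w}. if E w u then 1 / sqrt (real \<Delta> * d u) else 0)"
  proof -
    have "cc w = (\<Sum>u\<in>{u\<in>V - {w}. E w u}. 1 / sqrt (real \<Delta> * d u))"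
      unfolding cc_def Nbw w(2) ..
    also have "\<dots> = (\<Sum>u\<in>V - {w}. if E w u then 1 / sqrt (real \<Delta> * d u) else 0)"
      by (rule sum.inter_filter) (use fin in simp)
    finally show ?thesis .
  qed
  have per: "cc u + (if E w u then 1 / sqrt (real \<Delta> * d u) else 0)
      \<ge> (1 + (if E w u then 1 else 0)) / s" if u: "u \<in> V" for u
  proof -
    define a where "a = sqrt (d u)"
    have a1: "a \<ge> 1" unfolding a_def using dpos[OF u] by simp
    show ?thesis
    proof (cases "E w u")
      case True
      have "sqrt (real \<Delta> * d u) = s * a" unfolding s_def a_def by (simp add: real_sqrt_mult)
      moreover have "a + 1 / a \<ge> 2"
      proof -
        have "(a - 1)\<^sup>2 \<ge> 0" by simp
        hence "a * a + 1 \<ge> 2 * a" by (simp add: power2_eq_square algebra_simps)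
        thus ?thesis using a1 by (simp add: field_simps)
      qed
      ultimately have "sqrt (d u) / s + 1 / sqrt (real \<Delta> * d u) \<ge> 2 / s"
        using spos a1 unfolding a_def[symmetric] by (simp add: field_simps)
      thus ?thesis using ccge[OF u] True by simp
    next
      case False
      have "sqrt (d u) / s \<ge> 1 / s" using a1 spos unfolding a_def by (simp add: divide_right_mono)
      thus ?thesis using ccge[OF u] False by simp
    qed
  qed
  have "(\<Sum>u\<in>V. cc u) = cc w + (\<Sum>u\<in>V - {w}. cc u)"
    using fin w(1) by (simp add: sum.remove)
  also have "\<dots> = (\<Sum>u\<in>V - {w}. cc u + (if E w u then 1 / sqrt (real \<Delta> * d u) else 0))"
    unfolding ccw by (simp add: sum.distrib)
  also have "\<dots> \<ge> (\<Sum>u\<in>V - {w}. (1 + (if E w u then 1 else 0)) / s)"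
    by (rule sum_mono) (use per in auto)
  finally have "(\<Sum>u\<in>V. cc u) \<ge> (\<Sum>u\<in>V - {w}. (1 + (if E w u then 1 else 0)) / s)" .
  moreover have "(\<Sum>u\<in>V - {w}. (1 + (if E w u then 1 else 0)) / s) = (real n - 1 + real \<Delta>) / s"
  proof -
    have "(\<Sum>u\<in>V - {w}. (1 + (if E w u then 1 else 0)) / s)
        = ((\<Sum>u\<in>V - {w}. 1) + (\<Sum>u\<in>V - {w}. if E w u then 1 else 0)) / s"
      by (simp only: sum_divide_distrib[symmetric] sum.distrib)
    also have "(\<Sum>u\<in>V - {w}. 1::real) = real n - 1" using fin w(1) assms(3) Vne
      by (simp add: of_nat_diff card_gt_0_iff Suc_leI)
    also have "(\<Sum>u\<in>V - {w}. if E w u then 1 else 0::real) = real \<Delta>"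
    proof -
      have "(\<Sum>u\<in>V - {w}. if E w u then 1 else 0::real) = real (card (Nb w))"
      proof -
        have "(\<Sum>u\<in>V - {w}. if E w u then 1 else 0::real) = (\<Sum>u\<in>{u\<in>V - {w}. E w u}. 1)"
          by (rule sum.inter_filter[symmetric]) (use fin in simp)
        thus ?thesis unfolding Nbw by simp
      qed
      thus ?thesis using dNb[of w] w(2) by simp
    qed
    finally show ?thesis .
  qed
  ultimately have Rge: "2 * randic V E \<ge> (real n - 1 + real \<Delta>) / s" using R2 by simp
  have sn: "sqrt (real n - 1) > 0" using assms(4) by simp
  have Rgt: "randic V E > sqrt (real n - 1)"
  proof -
    have "sqrt (real n - 1) \<noteq> s" unfolding s_def using Dn by simp
    hence "(sqrt (real n - 1) - s)\<^sup>2 > 0" by simp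
    hence "(real n - 1) + s * s - 2 * sqrt (real n - 1) * s > 0"
      using assms(4) by (simp add: power2_eq_square algebra_simps)
    moreover have "s * s = real \<Delta>" unfolding s_def by simp
    ultimately have "real n - 1 + real \<Delta> > 2 * sqrt (real n - 1) * s" by linarith
    hence "(real n - 1 + real \<Delta>) / s > 2 * sqrt (real n - 1)" using spos by (simp add: field_simps)
    thus ?thesis using Rge by linarith
  qed
  have Rpos: "randic V E > 0" using Rgt sn by linarith
  have "signless_spectral_radius V E / randic V E \<le> real n / randic V E"
    using qle Rpos by (simp add: divide_right_mono)
  also have "\<dots> < real n / sqrt (real n - 1)"
    using Rgt sn assms(4) Rpos by (intro divide_strict_left_mono) (auto intro: mult_pos_pos)
  finally show ?thesis .
qed

end
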